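(* Let $D$ be a Krull domain. Then the set $\mathrm{Princ}(D)$ of principal ideals of $D$ is proconstructible in $\mathcal I(D)$.
   Context: $\mathcal I(D)$ is the set of ideals of $D$ with the Zariski topology having basis of open sets $\mathcal B(x_1,\ldots,x_n):=\{I\in\mathcal I(D)\mid x_1,\ldots,x_n\in I\}$; it is a spectral space. The constructible topology is the coarsest topology in which all open quasi-compact subsets are clopen; proconstructible means closed in the constructible topology. *)

theory Defs
  imports "HOL-Analysis.Analysis" "HOL-Computational_Algebra.Fraction_Field"
begin

text \<open>A discrete (rank one, normalized) valuation on the fraction field K of D,
  given by its values on the nonzero elements of K (the value at 0 is irrelevant).\<close>
definition discrete_valuation :: "('a::idom fract \<Rightarrow> int) \<Rightarrow> bool" where
  "discrete_valuation v \<longleftrightarrow>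
     (\<forall>x y. x \<noteq> 0 \<longrightarrow> y \<noteq> 0 \<longrightarrow> v (x * y) = v x + v y) \<and>
     (\<forall>x y. x \<noteq> 0 \<longrightarrow> y \<noteq> 0 \<longrightarrow> x + y \<noteq> 0 \<longrightarrow> v (x + y) \<ge> min (v x) (v y)) \<and>
     (\<forall>n. \<exists>x. x \<noteq> 0 \<and> v x = n)"

text \<open>D (the whole type 'a) is a Krull domain: there is a family of discrete valuation
  rings V_v = {x. x = 0 \<or> v x \<ge> 0} of the fraction field whose intersection is D and
  such that every nonzero element of D is a unit in all but finitely many V_v.\<close>
definition krull_domain :: "'a::idom itself \<Rightarrow> bool" where
  "krull_domain _ \<longleftrightarrow>
     (\<exists>\<V> :: ('a fract \<Rightarrow> int) set.
        (\<forall>v\<in>\<V>. discrete_valuation v) \<and>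
        range (\<lambda>a::'a. Fract a 1) = {x. \<forall>v\<in>\<V>. x = 0 \<or> v x \<ge> 0} \<and>
        (\<forall>a::'a. a \<noteq> 0 \<longrightarrow> finite {v\<in>\<V>. v (Fract a 1) \<noteq> 0}))"

definition is_ideal :: "'a::comm_ring_1 set \<Rightarrow> bool" where
  "is_ideal I \<longleftrightarrow> 0 \<in> I \<and> (\<forall>x\<in>I. \<forall>y\<in>I. x + y \<in> I) \<and> (\<forall>r. \<forall>x\<in>I. r * x \<in> I)"

definition ideals :: "'a::comm_ring_1 set set" where
  "ideals = {I. is_ideal I}"

definition principal_ideals :: "'a::comm_ring_1 set set" where
  "principal_ideals = {I. \<exists>a. I = {a * r | r. True}}"

definition zariski_basic :: "'a::comm_ring_1 list \<Rightarrow> 'a set set" where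
  "zariski_basic xs = {I \<in> ideals. set xs \<subseteq> I}"

definition zariski_ideals :: "'a::comm_ring_1 set topology" where
  "zariski_ideals = topology_generated_by (range zariski_basic)"

text \<open>The constructible topology of a topological space X: the coarsest topology on
  topspace X in which every open quasi-compact subset is clopen, i.e. the topology
  generated by the open quasi-compact sets and their complements.\<close>
definition constructible_topology :: "'b topology \<Rightarrow> 'b topology" where
  "constructible_topology X = topology_generated_by
     ({U. openin X U \<and> compactin X U} \<union>
      {topspace X - U | U. openin X U \<and> compactin X U})"

definition proconstructible :: "'b topology \<Rightarrow> 'b set \<Rightarrow> bool" where
  "proconstructible X S \<longleftrightarrow> closedin (constructible_topology X) S"

end

theory Submission
  imports Defs
begin

lemma fract_ne0: "(a::'a::idom) \<noteq> 0 \<Longrightarrow> Fract a 1 \<noteq> 0"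
  by (metis Zero_fract_def eq_fract(1) mult_1_right one_neq_zero)

lemma fract_eq1: "Fract (a::'a::idom) 1 = Fract b 1 \<Longrightarrow> a = b"
  by (simp add: eq_fract(1))

lemma zb_sub: "zariski_basic xs \<subseteq> ideals"
  by (auto simp: zariski_basic_def)

lemma zb_nil: "zariski_basic [] = ideals"
  by (auto simp: zariski_basic_def)

lemma zb_app: "zariski_basic (xs @ ys) = zariski_basic xs \<inter> zariski_basic ys"
  by (auto simp: zariski_basic_def)

lemma topZ: "topspace zariski_ideals = (ideals :: 'a::comm_ring_1 set set)"
  unfolding zariski_ideals_def topology_generated_by_topspace
proof (rule antisym)
  show "\<Union> (range zariski_basic) \<subseteq> (ideals :: 'a set set)" using zb_sub by blast
  show "(ideals :: 'a set set) \<subseteq> \<Union> (range zariski_basic)" using zb_nil by blast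
qed

lemma openZ: "openin zariski_ideals (zariski_basic xs)"
  unfolding zariski_ideals_def by (rule topology_generated_by_Basis) simp

lemma nbhd:
  assumes "generate_topology_on (range zariski_basic) U" "(I::'a::comm_ring_1 set) \<in> U"
  shows "\<exists>ys. I \<in> zariski_basic ys \<and> zariski_basic ys \<subseteq> U"
  using assms
proof (induction arbitrary: I rule: generate_topology_on.induct)
  case Empty then show ?case by simp
next
  case (Int a b)
  then obtain ys zs where "I \<in> zariski_basic ys" "zariski_basic ys \<subseteq> a"
     "I \<in> zariski_basic zs" "zariski_basic zs \<subseteq> b" by blast
  then show ?case by (intro exI[of _ "ys @ zs"]) (auto simp: zb_app)
next
  case (UN K)
  then obtain k where "k \<in> K" "I \<in> k" by blast
  with UN show ?case by blast
next
  case (Basis s) then show ?case by blast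
qed

definition gen_ideal :: "'a::comm_ring_1 list \<Rightarrow> 'a set" where
  "gen_ideal xs = \<Inter>{I. is_ideal I \<and> set xs \<subseteq> I}"

lemma gen_ideal_ideal: "is_ideal (gen_ideal xs)"
  unfolding gen_ideal_def is_ideal_def by auto

lemma gen_ideal_in: "gen_ideal xs \<in> zariski_basic xs"
  using gen_ideal_ideal unfolding zariski_basic_def ideals_def gen_ideal_def by auto

lemma gen_ideal_least: "is_ideal I \<Longrightarrow> set xs \<subseteq> I \<Longrightarrow> gen_ideal xs \<subseteq> I"
  unfolding gen_ideal_def by auto

lemma compactZ: "compactin zariski_ideals (zariski_basic xs)"
  unfolding compactin_def
proof (intro conjI allI impI)
  show "zariski_basic xs \<subseteq> topspace zariski_ideals" by (simp only: topZ zb_sub)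
next
  fix \<U> assume H: "Ball \<U> (openin zariski_ideals) \<and> zariski_basic xs \<subseteq> \<Union> \<U>"
  have "gen_ideal xs \<in> \<Union> \<U>" using H gen_ideal_in[of xs] by (meson subsetD)
  then obtain U where U: "U \<in> \<U>" "gen_ideal xs \<in> U" by (rule UnionE)
  have "openin zariski_ideals U" using H U(1) by (simp only: Ball_def)
  then have "generate_topology_on (range zariski_basic) U"
    unfolding zariski_ideals_def by (rule openin_topology_generated_by)
  then obtain ys where ys: "gen_ideal xs \<in> zariski_basic ys" "zariski_basic ys \<subseteq> U"
    using nbhd U(2) by blast
  have "zariski_basic xs \<subseteq> zariski_basic ys"
  proof
    fix J assume J: "J \<in> zariski_basic xs"
    then have "is_ideal J" "set xs \<subseteq> J" unfolding zariski_basic_def ideals_def by simp_all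
    then have "gen_ideal xs \<subseteq> J" by (rule gen_ideal_least)
    moreover have "set ys \<subseteq> gen_ideal xs" using ys(1) unfolding zariski_basic_def by simp
    ultimately show "J \<in> zariski_basic ys" using J unfolding zariski_basic_def by auto
  qed
  then have "zariski_basic xs \<subseteq> \<Union> {U}" using ys(2) by simp
  then show "\<exists>\<F>. finite \<F> \<and> \<F> \<subseteq> \<U> \<and> zariski_basic xs \<subseteq> \<Union> \<F>"
    using U(1) by (intro exI[of _ "{U}"]) simp
qed

abbreviation CT where "CT \<equiv> constructible_topology (zariski_ideals :: 'a::comm_ring_1 set topology)"

lemma openC1: "openin CT (zariski_basic (xs :: 'a::comm_ring_1 list))"
proof -
  have "zariski_basic xs \<in> {U. openin zariski_ideals U \<and> compactin zariski_ideals U}"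
    using openZ[of xs] compactZ[of xs] by blast
  then show ?thesis unfolding constructible_topology_def
    by (intro topology_generated_by_Basis) (rule UnI1)
qed

lemma openC2: "openin CT (ideals - zariski_basic (xs :: 'a::comm_ring_1 list))"
proof -
  have "ideals - zariski_basic xs \<in> {topspace zariski_ideals - U | U. openin zariski_ideals U \<and> compactin zariski_ideals U}"
    unfolding topZ using openZ[of xs] compactZ[of xs] by blast
  then show ?thesis unfolding constructible_topology_def
    by (intro topology_generated_by_Basis) (rule UnI2)
qed

lemma topC: "topspace CT = (ideals :: 'a::comm_ring_1 set set)"
proof -
  have "topspace CT \<subseteq> topspace (zariski_ideals :: 'a set topology)"
    unfolding constructible_topology_def topology_generated_by_topspace
  proof
    fix I :: "'a set" assume "I \<in> \<Union> ({U. openin zariski_ideals U \<and> compactin zariski_ideals U} \<union>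
      {topspace zariski_ideals - U | U. openin zariski_ideals U \<and> compactin zariski_ideals U})"
    then obtain S where S: "I \<in> S" "S \<in> {U. openin zariski_ideals U \<and> compactin zariski_ideals U} \<union>
      {topspace zariski_ideals - U | U. openin zariski_ideals U \<and> compactin zariski_ideals U}"
      by (rule UnionE)
    from S(2) have "S \<subseteq> topspace zariski_ideals"
    proof
      assume "S \<in> {U. openin zariski_ideals U \<and> compactin zariski_ideals U}"
      then show ?thesis by (simp add: openin_subset)
    next
      assume "S \<in> {topspace zariski_ideals - U | U. openin zariski_ideals U \<and> compactin zariski_ideals U}"
      then show ?thesis by auto
    qed
    then show "I \<in> topspace zariski_ideals" using S(1) by (rule subsetD)
  qed
  moreover have "(ideals :: 'a set set) \<subseteq> topspace CT"
    using openin_subset[OF openC1[of "[]"]] by (simp only: zb_nil)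
  ultimately show ?thesis using topZ by blast
qed

lemma openC_inter:
  assumes "finite Y"
  shows "openin CT (zariski_basic xs \<inter> (\<Inter>y\<in>Y. ideals - zariski_basic [y]))"
  using assms
proof (induction rule: finite_induct)
  case empty then show ?case using openC1 by simp
next
  case (insert y F)
  have e: "zariski_basic xs \<inter> (\<Inter>y\<in>insert y F. ideals - zariski_basic [y]) =
     (ideals - zariski_basic [y]) \<inter> (zariski_basic xs \<inter> (\<Inter>y\<in>F. ideals - zariski_basic [y]))"
    by blast
  show ?case unfolding e by (rule openin_Int[OF openC2 insert(3)])
qed

definition pid :: "'a::comm_ring_1 \<Rightarrow> 'a set" where
  "pid a = {a * r | r. True}"

lemma finite_princ:
  assumes K: "krull_domain TYPE('a::idom)" and x: "(x::'a) \<noteq> 0"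
  shows "finite {J \<in> (principal_ideals :: 'a set set). x \<in> J}"
proof -
  obtain \<V> :: "('a fract \<Rightarrow> int) set" where
    V1: "\<forall>v\<in>\<V>. discrete_valuation v" and
    V2: "range (\<lambda>a::'a. Fract a 1) = {x. \<forall>v\<in>\<V>. x = 0 \<or> v x \<ge> 0}" and
    V3: "\<forall>a::'a. a \<noteq> 0 \<longrightarrow> finite {v\<in>\<V>. v (Fract a 1) \<noteq> 0}"
    using K unfolding krull_domain_def by (elim exE conjE) (rule that)
  have mult: "v (p * q) = v p + v q" if "v \<in> \<V>" "p \<noteq> 0" "q \<noteq> 0" for v p q
    using V1 that unfolding discrete_valuation_def by blast
  have pos: "v (Fract c 1) \<ge> 0" if "v \<in> \<V>" "c \<noteq> 0" for v c
  proof -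
    have "Fract c 1 \<in> range (\<lambda>a::'a. Fract a 1)" by (rule rangeI)
    then have "Fract c 1 \<in> {x. \<forall>v\<in>\<V>. x = 0 \<or> v x \<ge> 0}" by (simp only: V2)
    then show ?thesis using that fract_ne0[of c] by simp
  qed
  define F where "F = {v\<in>\<V>. v (Fract x 1) \<noteq> 0}"
  have finF: "finite F" unfolding F_def using V3 x by simp
  define g where "g a = restrict (\<lambda>v. v (Fract a 1)) F" for a
  have bnd: "0 \<le> v (Fract a 1) \<and> v (Fract a 1) \<le> v (Fract x 1)"
    if "a dvd x" "v \<in> \<V>" for a v
  proof -
    obtain k where k: "x = a * k" using \<open>a dvd x\<close> by blast
    have a0: "a \<noteq> 0" and k0: "k \<noteq> 0" using k x by auto
    have e: "Fract x 1 = Fract a 1 * Fract k 1" using k by (simp add: mult_fract)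
    have "v (Fract x 1) = v (Fract a 1) + v (Fract k 1)"
      unfolding e by (rule mult[OF that(2) fract_ne0[OF a0] fract_ne0[OF k0]])
    then show ?thesis using pos[OF that(2) a0] pos[OF that(2) k0] by linarith
  qed
  have gin: "g a \<in> PiE F (\<lambda>v. {0..v (Fract x 1)})" if "a dvd x" for a
    using bnd[OF that] unfolding g_def F_def by auto
  have agree: "v (Fract a 1) = v (Fract b 1)"
    if "a dvd x" "b dvd x" "g a = g b" "v \<in> \<V>" for a b v
  proof (cases "v \<in> F")
    case True
    then show ?thesis using that(3) unfolding g_def by (metis restrict_apply')
  next
    case False
    then have "v (Fract x 1) = 0" using that(4) F_def by blast
    then show ?thesis using bnd[OF that(1,4)] bnd[OF that(2,4)] by simp
  qed
  have dvd1: "b dvd a" if "a dvd x" "b dvd x" "g a = g b" for a b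
  proof -
    have a0: "a \<noteq> 0" and b0: "b \<noteq> 0" using that x by auto
    define q where "q = Fract a b"
    have qb: "q * Fract b 1 = Fract a 1" unfolding q_def using b0
      by (simp add: mult_fract eq_fract(1) mult.commute)
    have q0: "q \<noteq> 0" using qb fract_ne0[OF a0] by auto
    have "\<forall>v\<in>\<V>. q = 0 \<or> v q \<ge> 0"
    proof
      fix v assume v: "v \<in> \<V>"
      have "v (Fract a 1) = v q + v (Fract b 1)"
        using mult[OF v q0 fract_ne0[OF b0]] qb by simp
      then show "q = 0 \<or> v q \<ge> 0" using agree[OF that v] by simp
    qed
    then have "q \<in> range (\<lambda>a::'a. Fract a 1)" by (simp only: V2 mem_Collect_eq)
    then obtain c where c: "q = Fract c 1" by blast
    then have "Fract a 1 = Fract (c * b) 1" using qb by (simp add: mult_fract)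
    then have "a = c * b" by (rule fract_eq1)
    then show ?thesis by simp
  qed
  have same: "pid a = pid b" if "a dvd x" "b dvd x" "g a = g b" for a b
  proof -
    have "b dvd a" "a dvd b" using dvd1 that by metis+
    then obtain c d where cd: "a = b * c" "b = a * d" by (metis dvdE)
    have "pid a \<subseteq> pid b"
    proof
      fix y assume "y \<in> pid a"
      then obtain r where "y = a * r" unfolding pid_def by blast
      then have "y = b * (c * r)" using cd(1) by (simp add: mult.assoc)
      then show "y \<in> pid b" unfolding pid_def by blast
    qed
    moreover have "pid b \<subseteq> pid a"
    proof
      fix y assume "y \<in> pid b"
      then obtain r where "y = b * r" unfolding pid_def by blast
      then have "y = a * (d * r)" using cd(2) by (simp add: mult.assoc)
      then show "y \<in> pid a" unfolding pid_def by blast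
    qed
    ultimately show ?thesis by blast
  qed
  have "{J \<in> (principal_ideals :: 'a set set). x \<in> J} \<subseteq>
     (\<lambda>f. pid (SOME a. a dvd x \<and> g a = f)) ` PiE F (\<lambda>v. {0..v (Fract x 1)})"
  proof
    fix J assume "J \<in> {J \<in> (principal_ideals :: 'a set set). x \<in> J}"
    then obtain a where J: "J = pid a" "x \<in> J" unfolding principal_ideals_def pid_def by blast
    then have ax: "a dvd x" unfolding pid_def by auto
    define a' where "a' = (SOME a'. a' dvd x \<and> g a' = g a)"
    have "a' dvd x \<and> g a' = g a" unfolding a'_def by (rule someI[of _ a]) (use ax in simp)
    then have "pid a' = J" using same ax J by metis
    then show "J \<in> (\<lambda>f. pid (SOME a. a dvd x \<and> g a = f)) ` PiE F (\<lambda>v. {0..v (Fract x 1)})"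
      using gin[OF ax] unfolding a'_def by blast
  qed
  moreover have "finite (PiE F (\<lambda>v. {0..v (Fract x 1)}))"
    using finF by (intro finite_PiE) auto
  ultimately show ?thesis using finite_subset by blast
qed

theorem theorem5p11:
  assumes "krull_domain TYPE('a::idom)"
  shows "proconstructible (zariski_ideals :: 'a set topology) principal_ideals"
proof -
  let ?P = "principal_ideals :: 'a set set"
  have Psub: "?P \<subseteq> ideals"
  proof
    fix J assume "J \<in> ?P"
    then obtain a where "J = {a * r | r. True}" unfolding principal_ideals_def by blast
    have "0 \<in> J" unfolding \<open>J = _\<close> by (rule CollectI, rule exI[of _ 0]) simp
    moreover have "\<forall>u\<in>J. \<forall>w\<in>J. u + w \<in> J"
    proof (intro ballI)
      fix u w assume "u \<in> J" "w \<in> J"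
      then obtain r s where "u = a * r" "w = a * s" unfolding \<open>J = _\<close> by blast
      then have "u + w = a * (r + s)" by (simp add: distrib_left)
      then show "u + w \<in> J" unfolding \<open>J = _\<close> by blast
    qed
    moreover have "\<forall>t. \<forall>u\<in>J. t * u \<in> J"
    proof (intro allI ballI)
      fix t u assume "u \<in> J"
      then obtain r where "u = a * r" unfolding \<open>J = _\<close> by blast
      then have "t * u = a * (t * r)" by (simp add: mult.left_commute)
      then show "t * u \<in> J" unfolding \<open>J = _\<close> by blast
    qed
    ultimately show "J \<in> ideals" unfolding ideals_def is_ideal_def by simp
  qed
  have "openin CT (ideals - ?P)"
    unfolding openin_subopen[of _ "ideals - ?P"]
  proof
    fix I assume I: "I \<in> ideals - ?P"
    have "I \<noteq> {0}"
    proof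
      assume "I = {0}"
      then have "I = {0 * r | r. True}" by auto
      then have "\<exists>a. I = {a * r | r. True}" by (rule exI)
      then have "I \<in> ?P" unfolding principal_ideals_def by (rule CollectI)
      then show False using I by simp
    qed
    moreover have "0 \<in> I" using I unfolding ideals_def is_ideal_def by blast
    ultimately obtain x where x: "x \<in> I" "x \<noteq> 0" by blast
    define Q where "Q = {J \<in> ?P. x \<in> J}"
    have finQ: "finite Q" unfolding Q_def using finite_princ[OF assms x(2)] .
    define w where "w J = (SOME z. z \<in> (I - J) \<union> (J - I))" for J
    have w: "w J \<in> (I - J) \<union> (J - I)" if "J \<in> Q" for J
    proof -
      have "J \<noteq> I" using that I unfolding Q_def by blast
      then have "\<exists>z. z \<in> (I - J) \<union> (J - I)" by blast
      then show ?thesis unfolding w_def by (rule someI_ex)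
    qed
    define X where "X = insert x {z. z \<in> I \<and> (\<exists>J\<in>Q. z = w J)}"
    define Y where "Y = {z. z \<notin> I \<and> (\<exists>J\<in>Q. z = w J)}"
    have finX: "finite X" unfolding X_def
      by (rule finite_insert[THEN iffD2], rule finite_subset[of _ "w ` Q"]) (use finQ in auto)
    have finY: "finite Y" unfolding Y_def
      by (rule finite_subset[of _ "w ` Q"]) (use finQ in auto)
    obtain xs where xs: "set xs = X" using finX finite_list by blast
    define T where "T = zariski_basic xs \<inter> (\<Inter>y\<in>Y. ideals - zariski_basic [y])"
    have "openin CT T" unfolding T_def by (rule openC_inter[OF finY])
    moreover have "I \<in> T"
    proof -
      have "X \<subseteq> I" unfolding X_def using x(1) by blast
      then have "I \<in> zariski_basic xs" using I xs unfolding zariski_basic_def by simp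
      moreover have "\<forall>y\<in>Y. I \<in> ideals - zariski_basic [y]"
        using I unfolding Y_def zariski_basic_def by simp
      ultimately show ?thesis unfolding T_def by blast
    qed
    moreover have "T \<subseteq> ideals - ?P"
    proof
      fix J assume J: "J \<in> T"
      then have J1: "J \<in> zariski_basic xs" and J2: "\<forall>y\<in>Y. J \<in> ideals - zariski_basic [y]"
        unfolding T_def by blast+
      have Ji: "J \<in> ideals" "X \<subseteq> J" "\<forall>y\<in>Y. y \<notin> J"
        using J1 J2 xs unfolding zariski_basic_def by auto
      show "J \<in> ideals - ?P"
      proof (rule ccontr)
        assume "J \<notin> ideals - ?P"
        then have "J \<in> ?P" using Ji(1) by blast
        moreover have "x \<in> J" using Ji(2) unfolding X_def by blast
        ultimately have "J \<in> Q" unfolding Q_def by blast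
        then have "w J \<in> (I - J) \<union> (J - I)" by (rule w)
        then show False
        proof
          assume "w J \<in> I - J"
          then have "w J \<in> X" using \<open>J \<in> Q\<close> unfolding X_def by auto
          then show False using Ji \<open>w J \<in> I - J\<close> by auto
        next
          assume "w J \<in> J - I"
          then have "w J \<in> Y" using \<open>J \<in> Q\<close> unfolding Y_def by auto
          then show False using Ji \<open>w J \<in> J - I\<close> by auto
        qed
      qed
    qed
    ultimately show "\<exists>T. openin CT T \<and> I \<in> T \<and> T \<subseteq> ideals - ?P" by blast
  qed
  then show ?thesis unfolding proconstructible_def closedin_def topC using Psub by simp
qed

end
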